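(* Let $G=(S,R,\rho)$ be a $q$-linear grammar and $D$ its $q$-derivative. Then for all $m,n\ge1$ and $f\in\mathbb{E}$, \[ D^n(\uparrow^m f)=q^{nm}\uparrow^m\!\big(D^n(f)\big). \]
   Context: $\mathbb{K}$ is a commutative ring with unity and characteristic zero, $q$ an indeterminate. For a set $S$ of master variables, $\mathbb{S}=\{s_i:s\in S,\ i\ge0\}$ is a set of non-commuting variables, $F(\mathbb{S})$ the free group on $\mathbb{S}$, $\mathbb{E}=\mathbb{K}[q][F(\mathbb{S})]$ its group algebra. A rule $R$ assigns to each $s_i$ an element $R(s_i)\in\mathbb{E}$, extended by $R(s_i^{-1})=-s_i^{-1}R(s_i)s_{i+1}^{-1}$. The up-arrow $\uparrow$ is the $\mathbb{K}[q]$-linear map replacing each letter $s_i^{\pm1}$ of a word by $s_{i+1}^{\pm1}$, $\uparrow^k$ its $k$-th iterate. An order is a map rewriting each word by permuting its letters; KSO is the identity. A $q$-grammar is $(S,R,\rho)$ with $\rho$ an order; its $q$-derivative is the $\mathbb{K}[q]$-linear map with $D(w_1\cdots w_n)=\sum_{j=1}^n\rho\big(w_1\cdots w_{j-1}R(w_j)\uparrow(w_{j+1}\cdots w_n)\big)$ for letters $w_j\in\mathbb{S}\cup\mathbb{S}^{-1}$, $D^0=\mathrm{id}$, $D^k=D\circ D^{k-1}$. $G$ is $q$-linear if $\rho=\mathrm{KSO}$ and $R(s_{i+1})=q\uparrow R(s_i)$ for every $s_i\in\mathbb{S}$. *)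

theory Defs
  imports "HOL-Library.Poly_Mapping" "HOL-Computational_Algebra.Polynomial"
begin

text \<open>Letters of the free group on the variables s_i (s in the master type 's, i a nat):
  ((s,i),True) is s_i and ((s,i),False) is s_i^{-1}.\<close>

type_synonym 's letter = "('s \<times> nat) \<times> bool"

fun reduce :: "'s letter list \<Rightarrow> 's letter list" where
  "reduce [] = []"
| "reduce (x # xs) =
     (case reduce xs of
        [] \<Rightarrow> [x]
      | y # ys \<Rightarrow> (if fst y = fst x \<and> snd y \<noteq> snd x then ys else x # y # ys))"

typedef 's fgw = "{w :: 's letter list. reduce w = w}"
  by (rule exI[of _ "[]"]) simp

definition word_of :: "'s letter list \<Rightarrow> 's fgw" where
  "word_of w = Abs_fgw (reduce w)"

definition gmul :: "'s fgw \<Rightarrow> 's fgw \<Rightarrow> 's fgw" where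
  "gmul a b = word_of (Rep_fgw a @ Rep_fgw b)"

type_synonym ('s, 'k) E = "'s fgw \<Rightarrow>\<^sub>0 'k poly"

definition qvar :: "'k::comm_ring_1 poly" where
  "qvar = [:0, 1:]"

definition emul :: "('s, 'k::comm_ring_1) E \<Rightarrow> ('s, 'k) E \<Rightarrow> ('s, 'k) E" where
  "emul f g = (\<Sum>a\<in>Poly_Mapping.keys f. \<Sum>b\<in>Poly_Mapping.keys g.
                 Poly_Mapping.single (gmul a b) (Poly_Mapping.lookup f a * Poly_Mapping.lookup g b))"

definition escale :: "'k::comm_ring_1 poly \<Rightarrow> ('s, 'k) E \<Rightarrow> ('s, 'k) E" where
  "escale c f = (\<Sum>a\<in>Poly_Mapping.keys f. Poly_Mapping.single a (c * Poly_Mapping.lookup f a))"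

definition eword :: "'s letter list \<Rightarrow> ('s, 'k::comm_ring_1) E" where
  "eword w = Poly_Mapping.single (word_of w) 1"

definition elin :: "('s fgw \<Rightarrow> ('s, 'k::comm_ring_1) E) \<Rightarrow> ('s, 'k) E \<Rightarrow> ('s, 'k) E" where
  "elin h f = (\<Sum>a\<in>Poly_Mapping.keys f. escale (Poly_Mapping.lookup f a) (h a))"

definition up_letter :: "'s letter \<Rightarrow> 's letter" where
  "up_letter l = (((fst (fst l)), Suc (snd (fst l))), snd l)"

definition up :: "('s, 'k::comm_ring_1) E \<Rightarrow> ('s, 'k) E" where
  "up = elin (\<lambda>a. eword (map up_letter (Rep_fgw a)))"

definition is_order :: "('s fgw \<Rightarrow> 's fgw) \<Rightarrow> bool" where
  "is_order \<rho> \<longleftrightarrow> (\<forall>w. mset (Rep_fgw (\<rho> w)) = mset (Rep_fgw w))"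

definition KSO :: "'s fgw \<Rightarrow> 's fgw" where
  "KSO = id"

definition rule_letter :: "('s \<times> nat \<Rightarrow> ('s, 'k::comm_ring_1) E) \<Rightarrow> 's letter \<Rightarrow> ('s, 'k) E" where
  "rule_letter R l =
     (if snd l then R (fst l)
      else - emul (emul (eword [l]) (R (fst l))) (eword [((fst (fst l), Suc (snd (fst l))), False)]))"

definition qD_word :: "('s \<times> nat \<Rightarrow> ('s, 'k::comm_ring_1) E) \<Rightarrow> ('s fgw \<Rightarrow> 's fgw)
                      \<Rightarrow> 's letter list \<Rightarrow> ('s, 'k) E" where
  "qD_word R \<rho> w = (\<Sum>j<length w.
      elin (\<lambda>a. Poly_Mapping.single (\<rho> a) 1)
        (emul (emul (eword (take j w)) (rule_letter R (w ! j)))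
              (up (eword (drop (Suc j) w)))))"

definition qD :: "('s \<times> nat \<Rightarrow> ('s, 'k::comm_ring_1) E) \<Rightarrow> ('s fgw \<Rightarrow> 's fgw)
                  \<Rightarrow> ('s, 'k) E \<Rightarrow> ('s, 'k) E" where
  "qD R \<rho> = elin (\<lambda>a. qD_word R \<rho> (Rep_fgw a))"

definition q_linear :: "('s \<times> nat \<Rightarrow> ('s, 'k::comm_ring_1) E) \<Rightarrow> ('s fgw \<Rightarrow> 's fgw) \<Rightarrow> bool" where
  "q_linear R \<rho> \<longleftrightarrow> is_order \<rho> \<and> \<rho> = KSO \<and>
     (\<forall>s i. R (s, Suc i) = escale qvar (up (R (s, i))))"

end

theory Submission
  imports Defs
begin

lemma sum_single_lookup:
  assumes "finite A" "Poly_Mapping.keys f \<subseteq> A"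
  shows "(\<Sum>a\<in>A. Poly_Mapping.single a (Poly_Mapping.lookup f a)) = f"
proof (rule poly_mapping_eqI)
  fix k
  have "(\<Sum>a\<in>A. Poly_Mapping.lookup (Poly_Mapping.single a (Poly_Mapping.lookup f a)) k) = (\<Sum>a\<in>A. if a = k then Poly_Mapping.lookup f k else 0)"
    by (rule sum.cong) (auto simp: lookup_single when_def)
  also have "\<dots> = Poly_Mapping.lookup f k" using assms by (auto simp: in_keys_iff)
  finally show "Poly_Mapping.lookup (\<Sum>a\<in>A. Poly_Mapping.single a (Poly_Mapping.lookup f a)) k = Poly_Mapping.lookup f k" by (simp add: lookup_sum)
qed

lemma lookup_escale [simp]: "Poly_Mapping.lookup (escale c f) x = c * Poly_Mapping.lookup f x"
proof -
  have "Poly_Mapping.lookup (escale c f) x = (\<Sum>a\<in>Poly_Mapping.keys f. if a = x then c * Poly_Mapping.lookup f x else 0)"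
    unfolding escale_def lookup_sum by (rule sum.cong) (auto simp: lookup_single when_def)
  also have "\<dots> = c * Poly_Mapping.lookup f x" by (auto simp: in_keys_iff)
  finally show ?thesis .
qed

lemma escale_add: "escale c (f + g) = escale c f + escale c g"
  by (rule poly_mapping_eqI) (simp add: lookup_add algebra_simps)
lemma escale_add_left: "escale (c + d) f = escale c f + escale d f"
  by (rule poly_mapping_eqI) (simp add: lookup_add algebra_simps)
lemma escale_zero_left [simp]: "escale 0 f = 0"
  by (rule poly_mapping_eqI) simp
lemma escale_zero [simp]: "escale c 0 = 0"
  by (rule poly_mapping_eqI) simp
lemma escale_one [simp]: "escale 1 f = f"
  by (rule poly_mapping_eqI) simp
lemma escale_escale: "escale c (escale d f) = escale (c * d) f"
  by (rule poly_mapping_eqI) (simp add: algebra_simps)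
lemma escale_uminus: "escale c (- f) = - escale c f"
  by (rule poly_mapping_eqI) simp
lemma uminus_escale: "- f = escale (-1) f"
  by (rule poly_mapping_eqI) simp
lemma escale_single: "escale c (Poly_Mapping.single a d) = Poly_Mapping.single a (c * d)"
  by (rule poly_mapping_eqI) (simp add: lookup_single when_def)
lemma escale_sum: "escale c (sum g A) = (\<Sum>x\<in>A. escale c (g x))"
  by (induction A rule: infinite_finite_induct) (auto simp: escale_add)

lemma elin_super:
  assumes "finite A" "Poly_Mapping.keys f \<subseteq> A"
  shows "elin h f = (\<Sum>a\<in>A. escale (Poly_Mapping.lookup f a) (h a))"
  unfolding elin_def using assms
  by (intro sum.mono_neutral_left) (auto simp: in_keys_iff)

definition lin :: "(('s, 'k::comm_ring_1) E \<Rightarrow> ('s, 'k) E) \<Rightarrow> bool" where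
  "lin T \<longleftrightarrow> (\<forall>f g. T (f + g) = T f + T g) \<and> (\<forall>c f. T (escale c f) = escale c (T f))"

lemma lin_zero: "lin T \<Longrightarrow> T 0 = 0"
proof -
  assume T: "lin T"
  have "T 0 = T (escale 0 0)" by simp
  also have "\<dots> = escale 0 (T 0)" using T unfolding lin_def by blast
  finally show ?thesis by simp
qed

lemma lin_sum: "lin T \<Longrightarrow> T (sum g A) = (\<Sum>x\<in>A. T (g x))"
proof (induction A rule: infinite_finite_induct)
  case (infinite A)
  then show ?case using lin_zero by simp
next
  case empty
  then show ?case using lin_zero by simp
next
  case (insert x F)
  then show ?case unfolding lin_def by simp
qed

lemma elin_add: "elin h (f + g) = elin h f + elin h g"
proof -
  let ?A = "Poly_Mapping.keys f \<union> Poly_Mapping.keys g \<union> Poly_Mapping.keys (f + g)"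
  have fin: "finite ?A" by simp
  have "elin h (f + g) = (\<Sum>a\<in>?A. escale (Poly_Mapping.lookup (f+g) a) (h a))"
    by (rule elin_super) auto
  also have "\<dots> = (\<Sum>a\<in>?A. escale (Poly_Mapping.lookup f a) (h a)) + (\<Sum>a\<in>?A. escale (Poly_Mapping.lookup g a) (h a))"
    by (simp add: lookup_add escale_add_left sum.distrib)
  also have "\<dots> = elin h f + elin h g"
  proof -
    have s1: "Poly_Mapping.keys f \<subseteq> ?A" and s2: "Poly_Mapping.keys g \<subseteq> ?A" by auto
    show ?thesis using elin_super[OF fin s1, of h] elin_super[OF fin s2, of h] by simp
  qed
  finally show ?thesis .
qed

lemma elin_escale: "elin h (escale c f) = escale c (elin h f)"
proof -
  let ?A = "Poly_Mapping.keys f \<union> Poly_Mapping.keys (escale c f)"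
  have fin: "finite ?A" by simp
  have "elin h (escale c f) = (\<Sum>a\<in>?A. escale (Poly_Mapping.lookup (escale c f) a) (h a))"
    by (rule elin_super) auto
  also have "\<dots> = escale c (\<Sum>a\<in>?A. escale (Poly_Mapping.lookup f a) (h a))"
    by (simp add: escale_sum escale_escale)
  also have "\<dots> = escale c (elin h f)"
    using elin_super[OF fin, of f h] by auto
  finally show ?thesis .
qed

lemma lin_elin: "lin (elin h)"
  unfolding lin_def by (simp add: elin_add elin_escale)

lemma elin_single: "elin h (Poly_Mapping.single a c) = escale c (h a)"
  using elin_super[of "{a}" "Poly_Mapping.single a c" h] by simp

lemma lin_rep: "lin T \<Longrightarrow> T f = elin (\<lambda>a. T (Poly_Mapping.single a 1)) f"
proof -
  assume T: "lin T"
  have "T f = T (\<Sum>a\<in>Poly_Mapping.keys f. Poly_Mapping.single a (Poly_Mapping.lookup f a))"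
    using sum_single_lookup[of "Poly_Mapping.keys f" f] by simp
  also have "\<dots> = (\<Sum>a\<in>Poly_Mapping.keys f. T (Poly_Mapping.single a (Poly_Mapping.lookup f a)))" by (rule lin_sum[OF T])
  also have "\<dots> = (\<Sum>a\<in>Poly_Mapping.keys f. escale (Poly_Mapping.lookup f a) (T (Poly_Mapping.single a 1)))"
  proof (rule sum.cong)
    fix a
    have "T (Poly_Mapping.single a (Poly_Mapping.lookup f a)) = T (escale (Poly_Mapping.lookup f a) (Poly_Mapping.single a 1))"
      by (simp add: escale_single)
    also have "\<dots> = escale (Poly_Mapping.lookup f a) (T (Poly_Mapping.single a 1))"
      using T unfolding lin_def by blast
    finally show "T (Poly_Mapping.single a (Poly_Mapping.lookup f a)) = escale (Poly_Mapping.lookup f a) (T (Poly_Mapping.single a 1))" .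
  qed simp
  finally show ?thesis unfolding elin_def .
qed

lemma lin_eq:
  assumes "lin T" "lin T'" "\<And>a. T (Poly_Mapping.single a 1) = T' (Poly_Mapping.single a 1)"
  shows "T f = T' f"
proof -
  have "T f = elin (\<lambda>a. T (Poly_Mapping.single a 1)) f" by (rule lin_rep[OF assms(1)])
  also have "(\<lambda>a. T (Poly_Mapping.single a 1)) = (\<lambda>a. T' (Poly_Mapping.single a 1))" using assms(3) by blast
  also have "elin \<dots> f = T' f" by (rule lin_rep[OF assms(2), symmetric])
  finally show ?thesis .
qed

lemma lin_uminus: "lin T \<Longrightarrow> T (- f) = - T f"
  by (simp add: lin_def uminus_escale)


lemma lin_comp: "lin T \<Longrightarrow> lin S \<Longrightarrow> lin (\<lambda>x. T (S x))"
  unfolding lin_def by simp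

lemma lin_escale: "lin (escale c)"
  unfolding lin_def by (simp add: escale_add escale_escale mult.commute)

lemma lin_up: "lin up"
  unfolding up_def by (rule lin_elin)

lemma lin_qD: "lin (qD R \<rho>)"
  unfolding qD_def by (rule lin_elin)

lemma up_escale: "up (escale c f) = escale c (up f)"
  using lin_up unfolding lin_def by blast

lemma qD_escale: "qD R \<rho> (escale c f) = escale c (qD R \<rho> f)"
  using lin_qD unfolding lin_def by blast

subsection \<open>Free group words\<close>

fun isred :: "'s letter list \<Rightarrow> bool" where
  "isred [] = True"
| "isred [x] = True"
| "isred (x # y # ys) = (\<not> (fst y = fst x \<and> snd y \<noteq> snd x) \<and> isred (y # ys))"

lemma isred_tl: "isred (y # ys) \<Longrightarrow> isred ys"
  by (cases ys) auto

lemma isred_reduce: "isred (reduce w)"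
proof (induction w)
  case Nil
  then show ?case by simp
next
  case (Cons x xs)
  then show ?case
    by (cases "reduce xs") (auto dest: isred_tl)
qed

lemma reduce_isred: "isred w \<Longrightarrow> reduce w = w"
proof (induction w)
  case Nil
  then show ?case by simp
next
  case (Cons x xs)
  then have "reduce xs = xs" using isred_tl by blast
  then show ?case using Cons.prems by (cases xs) auto
qed

lemma reduce_reduce [simp]: "reduce (reduce w) = reduce w"
  by (rule reduce_isred[OF isred_reduce])

lemma reduce_Rep [simp]: "reduce (Rep_fgw a) = Rep_fgw a"
  using Rep_fgw[of a] by simp

lemma Rep_word_of [simp]: "Rep_fgw (word_of w) = reduce w"
  unfolding word_of_def by (rule Abs_fgw_inverse) simp

lemma reduce_map_up: "reduce (map up_letter w) = map up_letter (reduce w)"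
proof (induction w)
  case Nil
  then show ?case by simp
next
  case (Cons x xs)
  then show ?case
    by (cases "reduce xs") (auto simp: up_letter_def prod_eq_iff)
qed

definition upw :: "'s fgw \<Rightarrow> 's fgw" where
  "upw a = word_of (map up_letter (Rep_fgw a))"

lemma Rep_upw: "Rep_fgw (upw a) = map up_letter (Rep_fgw a)"
  unfolding upw_def by (simp add: reduce_map_up)

lemma word_of_reduce: "word_of (reduce w) = word_of w"
  unfolding word_of_def by simp

lemma upw_word_of: "upw (word_of v) = word_of (map up_letter v)"
proof -
  have "upw (word_of v) = word_of (map up_letter (reduce v))" unfolding upw_def by simp
  also have "\<dots> = word_of (reduce (map up_letter v))" by (simp add: reduce_map_up)
  also have "\<dots> = word_of (map up_letter v)" by (rule word_of_reduce)
  finally show ?thesis .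
qed

lemma upw_gmul: "upw (gmul a b) = gmul (upw a) (upw b)"
proof -
  have "gmul (upw a) (upw b) = word_of (map up_letter (Rep_fgw a @ Rep_fgw b))"
    unfolding gmul_def by (simp add: Rep_upw)
  then show ?thesis unfolding gmul_def by (simp add: upw_word_of)
qed

lemma up_single: "up (Poly_Mapping.single a c) = Poly_Mapping.single (upw a) c"
  unfolding up_def elin_single eword_def upw_def by (simp add: escale_single)

lemma up_eword: "up (eword v) = eword (map up_letter v)"
  unfolding eword_def up_single upw_word_of ..

subsection \<open>Multiplication\<close>

lemma emul_super:
  assumes "finite A" "Poly_Mapping.keys f \<subseteq> A" "finite B" "Poly_Mapping.keys g \<subseteq> B"
  shows "emul f g = (\<Sum>a\<in>A. \<Sum>b\<in>B. Poly_Mapping.single (gmul a b) (Poly_Mapping.lookup f a * Poly_Mapping.lookup g b))"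
proof -
  have "emul f g = (\<Sum>a\<in>Poly_Mapping.keys f. \<Sum>b\<in>B. Poly_Mapping.single (gmul a b) (Poly_Mapping.lookup f a * Poly_Mapping.lookup g b))"
    unfolding emul_def
    by (intro sum.cong refl sum.mono_neutral_left) (use assms in \<open>auto simp: in_keys_iff\<close>)
  also have "\<dots> = (\<Sum>a\<in>A. \<Sum>b\<in>B. Poly_Mapping.single (gmul a b) (Poly_Mapping.lookup f a * Poly_Mapping.lookup g b))"
    by (intro sum.mono_neutral_left) (use assms in \<open>auto simp: in_keys_iff\<close>)
  finally show ?thesis .
qed

lemma emul_add_left: "emul (f1 + f2) g = emul f1 g + emul f2 g"
proof -
  let ?A = "Poly_Mapping.keys f1 \<union> Poly_Mapping.keys f2 \<union> Poly_Mapping.keys (f1 + f2)"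
  let ?B = "Poly_Mapping.keys g"
  have "emul (f1 + f2) g = (\<Sum>a\<in>?A. \<Sum>b\<in>?B. Poly_Mapping.single (gmul a b) (Poly_Mapping.lookup (f1 + f2) a * Poly_Mapping.lookup g b))"
    by (rule emul_super) auto
  also have "\<dots> = (\<Sum>a\<in>?A. \<Sum>b\<in>?B. Poly_Mapping.single (gmul a b) (Poly_Mapping.lookup f1 a * Poly_Mapping.lookup g b))
     + (\<Sum>a\<in>?A. \<Sum>b\<in>?B. Poly_Mapping.single (gmul a b) (Poly_Mapping.lookup f2 a * Poly_Mapping.lookup g b))"
    by (simp add: lookup_add distrib_right single_add sum.distrib)
  also have "\<dots> = emul f1 g + emul f2 g"
    by (subst (1 2) emul_super[of ?A _ ?B]) auto
  finally show ?thesis .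
qed

lemma emul_add_right: "emul f (g1 + g2) = emul f g1 + emul f g2"
proof -
  let ?A = "Poly_Mapping.keys f"
  let ?B = "Poly_Mapping.keys g1 \<union> Poly_Mapping.keys g2 \<union> Poly_Mapping.keys (g1 + g2)"
  have "emul f (g1 + g2) = (\<Sum>a\<in>?A. \<Sum>b\<in>?B. Poly_Mapping.single (gmul a b) (Poly_Mapping.lookup f a * Poly_Mapping.lookup (g1 + g2) b))"
    by (rule emul_super) auto
  also have "\<dots> = (\<Sum>a\<in>?A. \<Sum>b\<in>?B. Poly_Mapping.single (gmul a b) (Poly_Mapping.lookup f a * Poly_Mapping.lookup g1 b))
     + (\<Sum>a\<in>?A. \<Sum>b\<in>?B. Poly_Mapping.single (gmul a b) (Poly_Mapping.lookup f a * Poly_Mapping.lookup g2 b))"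
    by (simp add: lookup_add distrib_left single_add sum.distrib)
  also have "\<dots> = emul f g1 + emul f g2"
    by (subst (1 2) emul_super[of ?A _ ?B]) auto
  finally show ?thesis .
qed

lemma emul_escale_left: "emul (escale c f) g = escale c (emul f g)"
proof -
  let ?A = "Poly_Mapping.keys f \<union> Poly_Mapping.keys (escale c f)"
  let ?B = "Poly_Mapping.keys g"
  have "emul (escale c f) g = (\<Sum>a\<in>?A. \<Sum>b\<in>?B. Poly_Mapping.single (gmul a b) (Poly_Mapping.lookup (escale c f) a * Poly_Mapping.lookup g b))"
    by (rule emul_super) auto
  also have "\<dots> = escale c (\<Sum>a\<in>?A. \<Sum>b\<in>?B. Poly_Mapping.single (gmul a b) (Poly_Mapping.lookup f a * Poly_Mapping.lookup g b))"
    by (simp add: escale_sum escale_single mult.assoc)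
  also have "\<dots> = escale c (emul f g)"
    by (subst emul_super[of ?A _ ?B]) auto
  finally show ?thesis .
qed

lemma emul_escale_right: "emul f (escale c g) = escale c (emul f g)"
proof -
  let ?A = "Poly_Mapping.keys f"
  let ?B = "Poly_Mapping.keys g \<union> Poly_Mapping.keys (escale c g)"
  have "emul f (escale c g) = (\<Sum>a\<in>?A. \<Sum>b\<in>?B. Poly_Mapping.single (gmul a b) (Poly_Mapping.lookup f a * Poly_Mapping.lookup (escale c g) b))"
    by (rule emul_super) auto
  also have "\<dots> = escale c (\<Sum>a\<in>?A. \<Sum>b\<in>?B. Poly_Mapping.single (gmul a b) (Poly_Mapping.lookup f a * Poly_Mapping.lookup g b))"
    by (simp add: escale_sum escale_single mult.assoc mult.left_commute)
  also have "\<dots> = escale c (emul f g)"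
    by (subst emul_super[of ?A _ ?B]) auto
  finally show ?thesis .
qed

lemma emul_single: "emul (Poly_Mapping.single a c) (Poly_Mapping.single b d) = Poly_Mapping.single (gmul a b) (c * d)"
  by (subst emul_super[of "{a}" _ "{b}"]) auto

lemma lin_emul_left: "lin (\<lambda>f. emul f g)"
  unfolding lin_def by (simp add: emul_add_left emul_escale_left)

lemma lin_emul_right: "lin (\<lambda>g. emul f g)"
  unfolding lin_def by (simp add: emul_add_right emul_escale_right)

lemma up_emul: "up (emul f g) = emul (up f) (up g)"
proof -
  have single_case: "up (emul (Poly_Mapping.single a 1) g) = emul (up (Poly_Mapping.single a 1)) (up g)" for a
  proof (rule lin_eq[where T = "\<lambda>g. up (emul (Poly_Mapping.single a 1) g)" and T' = "\<lambda>g. emul (up (Poly_Mapping.single a 1)) (up g)"])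
    show "lin (\<lambda>g. up (emul (Poly_Mapping.single a 1) g))" by (rule lin_comp[OF lin_up lin_emul_right])
    show "lin (\<lambda>g. emul (up (Poly_Mapping.single a 1)) (up g))" by (rule lin_comp[OF lin_emul_right lin_up])
    fix b
    show "up (emul (Poly_Mapping.single a 1) (Poly_Mapping.single b 1)) = emul (up (Poly_Mapping.single a 1)) (up (Poly_Mapping.single b 1))"
      by (simp add: emul_single up_single upw_gmul)
  qed
  show ?thesis
  proof (rule lin_eq[where T = "\<lambda>f. up (emul f g)" and T' = "\<lambda>f. emul (up f) (up g)"])
    show "lin (\<lambda>f. up (emul f g))" by (rule lin_comp[OF lin_up lin_emul_left])
    show "lin (\<lambda>f. emul (up f) (up g))" by (rule lin_comp[OF lin_emul_left lin_up])
    fix a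
    show "up (emul (Poly_Mapping.single a 1) g) = emul (up (Poly_Mapping.single a 1)) (up g)"
      by (rule single_case)
  qed
qed


subsection \<open>The derivative\<close>

lemma elin_KSO: "elin (\<lambda>a. Poly_Mapping.single (KSO a) 1) x = x"
proof -
  have "lin (\<lambda>x. x :: ('s, 'k::comm_ring_1) E)" unfolding lin_def by simp
  from lin_rep[OF this, of x] show ?thesis by (simp add: KSO_def)
qed

lemma qD_single: "qD R \<rho> (Poly_Mapping.single a c) = escale c (qD_word R \<rho> (Rep_fgw a))"
  unfolding qD_def by (rule elin_single)

lemma rule_letter_up:
  assumes hR: "\<And>s i. R (s, Suc i) = escale qvar (up (R (s, i)))"
  shows "rule_letter R (up_letter l) = escale qvar (up (rule_letter R l))"
proof -
  obtain s i b where l: "l = ((s, i), b)" by (metis prod.exhaust)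
  show ?thesis
  proof (cases b)
    case True
    then show ?thesis by (simp add: l rule_letter_def up_letter_def hR)
  next
    case False
    then show ?thesis
      by (simp add: l rule_letter_def up_letter_def hR lin_uminus[OF lin_up] up_emul up_eword
          escale_uminus emul_escale_left emul_escale_right)
  qed
qed

lemma qD_word_up:
  assumes hR: "\<And>s i. R (s, Suc i) = escale qvar (up (R (s, i)))"
  shows "qD_word R KSO (map up_letter w) = escale qvar (up (qD_word R KSO w))"
proof -
  have "escale qvar (up (qD_word R KSO w)) =
    (\<Sum>j<length w. escale qvar (up (emul (emul (eword (take j w)) (rule_letter R (w ! j))) (up (eword (drop (Suc j) w))))))"
    unfolding qD_word_def elin_KSO
    by (simp add: lin_sum[OF lin_up] escale_sum)
  also have "\<dots> = (\<Sum>j<length w. emul (emul (eword (take j (map up_letter w))) (rule_letter R (map up_letter w ! j))) (up (eword (drop (Suc j) (map up_letter w)))))"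
  proof (rule sum.cong)
    fix j assume "j \<in> {..<length w}"
    then have j: "j < length w" by simp
    show "escale qvar (up (emul (emul (eword (take j w)) (rule_letter R (w ! j))) (up (eword (drop (Suc j) w))))) =
      emul (emul (eword (take j (map up_letter w))) (rule_letter R (map up_letter w ! j))) (up (eword (drop (Suc j) (map up_letter w))))"
      using j by (simp add: take_map drop_map up_eword[symmetric] rule_letter_up[OF hR] up_emul
          emul_escale_left emul_escale_right)
  qed simp
  also have "\<dots> = qD_word R KSO (map up_letter w)"
    unfolding qD_word_def elin_KSO by simp
  finally show ?thesis by simp
qed

lemma qD_up:
  assumes hR: "\<And>s i. R (s, Suc i) = escale qvar (up (R (s, i)))"
  shows "qD R KSO (up f) = escale qvar (up (qD R KSO f))"
proof (rule lin_eq[where T = "\<lambda>f. qD R KSO (up f)" and T' = "\<lambda>f. escale qvar (up (qD R KSO f))"])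
  show "lin (\<lambda>f. qD R KSO (up f))" by (rule lin_comp[OF lin_qD lin_up])
  show "lin (\<lambda>f. escale qvar (up (qD R KSO f)))"
    by (rule lin_comp[OF lin_escale lin_comp[OF lin_up lin_qD]])
  fix a
  show "qD R KSO (up (Poly_Mapping.single a 1)) = escale qvar (up (qD R KSO (Poly_Mapping.single a 1)))"
    by (simp add: up_single qD_single Rep_upw qD_word_up[OF hR])
qed

lemma qD_upm:
  assumes hR: "\<And>s i. R (s, Suc i) = escale qvar (up (R (s, i)))"
  shows "qD R KSO ((up ^^ m) f) = escale (qvar ^ m) ((up ^^ m) (qD R KSO f))"
proof (induction m)
  case 0
  then show ?case by simp
next
  case (Suc m)
  have "qD R KSO ((up ^^ Suc m) f) = escale qvar (up (qD R KSO ((up ^^ m) f)))"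
    by (simp add: qD_up[OF hR])
  also have "\<dots> = escale qvar (up (escale (qvar ^ m) ((up ^^ m) (qD R KSO f))))" using Suc by simp
  also have "\<dots> = escale (qvar ^ Suc m) ((up ^^ Suc m) (qD R KSO f))"
    by (simp add: up_escale escale_escale)
  finally show ?case .
qed

theorem proposition4p6:
  fixes R :: "'s \<times> nat \<Rightarrow> ('s, 'k::{comm_ring_1, ring_char_0}) E"
    and \<rho> :: "'s fgw \<Rightarrow> 's fgw"
    and f :: "('s, 'k) E"
    and m n :: nat
  assumes "q_linear R \<rho>" and "m \<ge> 1" and "n \<ge> 1"
  shows "(qD R \<rho> ^^ n) ((up ^^ m) f) = escale (qvar ^ (n * m)) ((up ^^ m) ((qD R \<rho> ^^ n) f))"
proof -
  have rho: "\<rho> = KSO" and hR: "\<And>s i. R (s, Suc i) = escale qvar (up (R (s, i)))"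
    using assms(1) unfolding q_linear_def by auto
  show ?thesis unfolding rho
  proof (induction n)
    case 0
    then show ?case by simp
  next
    case (Suc n)
    have "(qD R KSO ^^ Suc n) ((up ^^ m) f) = qD R KSO (escale (qvar ^ (n * m)) ((up ^^ m) ((qD R KSO ^^ n) f)))"
      using Suc by simp
    also have "\<dots> = escale (qvar ^ (n * m)) (qD R KSO ((up ^^ m) ((qD R KSO ^^ n) f)))"
      by (simp add: qD_escale)
    also have "\<dots> = escale (qvar ^ (n * m)) (escale (qvar ^ m) ((up ^^ m) ((qD R KSO ^^ Suc n) f)))"
      by (simp add: qD_upm[OF hR])
    also have "\<dots> = escale (qvar ^ (Suc n * m)) ((up ^^ m) ((qD R KSO ^^ Suc n) f))"
      by (simp add: escale_escale power_add mult.commute)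
    finally show ?case .
  qed
qed

end
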